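(* The Burnside ring of finite racks $\mathrm{B}(\mathcal{R})$ admits the structure of a commutative ring with unit, with respect to a product satisfying $b(R')\,b(R)=b(R'\times R)$ for all finite racks $R,R'$, and with multiplicative identity $b(\star)$, the class of the one-element rack $\star$.
   Context: A rack is a set $R$ with a binary operation $\rhd$ such that every left multiplication $\ell_a\colon b\mapsto a\rhd b$ is a bijection and $a\rhd(b\rhd c)=(a\rhd b)\rhd(a\rhd c)$ for all $a,b,c$. The product $R'\times R$ of racks is the cartesian product with componentwise operation. A subrack is a subset $S$ with $\ell_s(S)=S$ for all $s\in S$; a decomposition of $R$ into $S$ and $T$ means $S,T$ are disjoint subracks (possibly empty) with $S\cup T=R$. $\mathrm{B}(\mathcal{R})$ is the abelian group generated by symbols $b(R)$, one for each finite rack $R$, subject to $b(R_1)=b(R_2)$ whenever $R_1\cong R_2$, and $b(R)=b(S)+b(T)$ whenever $R$ decomposes into $S$ and $T$. *)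

theory Defs
  imports "HOL-Algebra.Algebra"
begin

text \<open>A rack is given by a carrier set S and a binary operation f (values of f
outside S are irrelevant).\<close>

definition is_rack :: "'a set \<Rightarrow> ('a \<Rightarrow> 'a \<Rightarrow> 'a) \<Rightarrow> bool" where
  "is_rack S f \<longleftrightarrow>
     (\<forall>a\<in>S. bij_betw (f a) S S) \<and>
     (\<forall>a\<in>S. \<forall>b\<in>S. \<forall>c\<in>S. f a (f b c) = f (f a b) (f a c))"

definition finite_rack :: "'a set \<Rightarrow> ('a \<Rightarrow> 'a \<Rightarrow> 'a) \<Rightarrow> bool" where
  "finite_rack S f \<longleftrightarrow> is_rack S f \<and> finite S"

definition rack_iso :: "'a set \<Rightarrow> ('a \<Rightarrow> 'a \<Rightarrow> 'a) \<Rightarrow> 'b set \<Rightarrow> ('b \<Rightarrow> 'b \<Rightarrow> 'b) \<Rightarrow> bool" where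
  "rack_iso S f T g \<longleftrightarrow>
     (\<exists>h. bij_betw h S T \<and> (\<forall>a\<in>S. \<forall>b\<in>S. h (f a b) = g (h a) (h b)))"

definition subrack :: "'a set \<Rightarrow> 'a set \<Rightarrow> ('a \<Rightarrow> 'a \<Rightarrow> 'a) \<Rightarrow> bool" where
  "subrack T S f \<longleftrightarrow> T \<subseteq> S \<and> (\<forall>s\<in>T. f s ` T = T)"

definition rack_decomp :: "'a set \<Rightarrow> ('a \<Rightarrow> 'a \<Rightarrow> 'a) \<Rightarrow> 'a set \<Rightarrow> 'a set \<Rightarrow> bool" where
  "rack_decomp S f T U \<longleftrightarrow> subrack T S f \<and> subrack U S f \<and> T \<inter> U = {} \<and> T \<union> U = S"

text \<open>Every finite rack is isomorphic to one whose carrier is a finite set of naturals,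
so such racks serve as the generators b(R).\<close>

type_synonym nrack = "nat set \<times> (nat \<Rightarrow> nat \<Rightarrow> nat)"

definition nfinite_rack :: "nrack \<Rightarrow> bool" where
  "nfinite_rack R \<longleftrightarrow> finite_rack (fst R) (snd R)"

definition nrack_prod :: "nrack \<Rightarrow> nrack \<Rightarrow> nrack" where
  "nrack_prod R' R =
     (prod_encode ` (fst R' \<times> fst R),
      \<lambda>u v. prod_encode (snd R' (fst (prod_decode u)) (fst (prod_decode v)),
                         snd R (snd (prod_decode u)) (snd (prod_decode v))))"

definition star_rack :: nrack where
  "star_rack = ({0}, \<lambda>a b. 0)"

definition free_carrier :: "(nrack \<Rightarrow> int) set" where
  "free_carrier = {x. finite {R. x R \<noteq> 0} \<and> (\<forall>R. x R \<noteq> 0 \<longrightarrow> nfinite_rack R)}"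

definition free_group :: "(nrack \<Rightarrow> int) monoid" where
  "free_group = \<lparr>carrier = free_carrier, monoid.mult = (\<lambda>x y R. x R + y R), one = (\<lambda>R. 0)\<rparr>"

definition gen :: "nrack \<Rightarrow> (nrack \<Rightarrow> int)" where
  "gen R = (\<lambda>Q. if Q = R then 1 else 0)"

definition burnside_relators :: "(nrack \<Rightarrow> int) set" where
  "burnside_relators =
     {(\<lambda>Q. gen R1 Q - gen R2 Q) | R1 R2.
        nfinite_rack R1 \<and> nfinite_rack R2 \<and> rack_iso (fst R1) (snd R1) (fst R2) (snd R2)}
   \<union> {(\<lambda>Q. gen (S0, f) Q - gen (T, f) Q - gen (U, f) Q) | S0 f T U.
        finite_rack S0 f \<and> rack_decomp S0 f T U}"

definition burnside_relations :: "(nrack \<Rightarrow> int) set" where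
  "burnside_relations = generate free_group burnside_relators"

text \<open>B(R) as the quotient group (written multiplicatively in HOL-Algebra, i.e. its
group operation is the addition of B(R)).\<close>
definition burnside_group :: "(nrack \<Rightarrow> int) set monoid" where
  "burnside_group = free_group Mod burnside_relations"

definition bclass :: "nrack \<Rightarrow> (nrack \<Rightarrow> int) set" where
  "bclass R = burnside_relations #>\<^bsub>free_group\<^esub> gen R"

end

theory Submission
  imports Defs
begin

definition supp :: "(nrack \<Rightarrow> int) \<Rightarrow> nrack set" where
  "supp x = {A. x A \<noteq> 0}"
definition fadd :: "(nrack \<Rightarrow> int) \<Rightarrow> (nrack \<Rightarrow> int) \<Rightarrow> (nrack \<Rightarrow> int)" where
  "fadd x y = (\<lambda>R. x R + y R)"
definition fneg :: "(nrack \<Rightarrow> int) \<Rightarrow> (nrack \<Rightarrow> int)" where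
  "fneg x = (\<lambda>R. - x R)"
definition fsub :: "(nrack \<Rightarrow> int) \<Rightarrow> (nrack \<Rightarrow> int) \<Rightarrow> (nrack \<Rightarrow> int)" where
  "fsub x y = (\<lambda>R. x R - y R)"
definition fz :: "nrack \<Rightarrow> int" where "fz = (\<lambda>R. 0)"

lemma fapp: "fadd x y R = x R + y R" "fneg x R = - x R" "fsub x y R = x R - y R" "fz R = 0"
  by (simp_all add: fadd_def fneg_def fsub_def fz_def)

definition lin :: "(nrack \<Rightarrow> nrack \<Rightarrow> int) \<Rightarrow> (nrack \<Rightarrow> int) \<Rightarrow> (nrack \<Rightarrow> int)" where
  "lin g x = (\<lambda>Q. \<Sum>A\<in>supp x. x A * g A Q)"

definition P :: "(nrack \<Rightarrow> int) \<Rightarrow> (nrack \<Rightarrow> int) \<Rightarrow> (nrack \<Rightarrow> int)" where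
  "P x y = lin (\<lambda>A. lin (\<lambda>B. gen (nrack_prod A B)) y) x"

abbreviation "fs x \<equiv> finite (supp x)"

lemma lin_super: "finite S \<Longrightarrow> supp x \<subseteq> S \<Longrightarrow> lin g x Q = (\<Sum>A\<in>S. x A * g A Q)"
  unfolding lin_def by (rule sum.mono_neutral_left) (auto simp: fapp supp_def)

lemma supp_fadd: "supp (fadd x y) \<subseteq> supp x \<union> supp y" by (auto simp: fapp supp_def)
lemma supp_fsub: "supp (fsub x y) \<subseteq> supp x \<union> supp y" by (auto simp: fapp supp_def)
lemma supp_fneg[simp]: "supp (fneg x) = supp x" by (auto simp: fapp supp_def)
lemma supp_fz[simp]: "supp fz = {}" by (auto simp: fapp supp_def)
lemma supp_gen[simp]: "supp (gen A) = {A}" by (auto simp: supp_def gen_def)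

lemma fs_fadd[simp]: "fs x \<Longrightarrow> fs y \<Longrightarrow> fs (fadd x y)"
  by (meson finite_UnI rev_finite_subset supp_fadd)
lemma fs_fsub[simp]: "fs x \<Longrightarrow> fs y \<Longrightarrow> fs (fsub x y)"
  by (meson finite_UnI rev_finite_subset supp_fsub)

lemma lin_fadd: "fs x \<Longrightarrow> fs y \<Longrightarrow> lin g (fadd x y) = fadd (lin g x) (lin g y)"
proof (rule ext)
  fix Q assume f: "fs x" "fs y"
  let ?S = "supp x \<union> supp y"
  have "lin g (fadd x y) Q = (\<Sum>A\<in>?S. fadd x y A * g A Q)"
    using f supp_fadd by (intro lin_super) auto
  also have "\<dots> = (\<Sum>A\<in>?S. x A * g A Q) + (\<Sum>A\<in>?S. y A * g A Q)"
    by (simp add: fapp distrib_right sum.distrib)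
  also have "\<dots> = lin g x Q + lin g y Q"
    using f by (simp add: lin_super[of ?S])
  finally show "lin g (fadd x y) Q = fadd (lin g x) (lin g y) Q" by (simp add: fapp)
qed

lemma lin_fsub: "fs x \<Longrightarrow> fs y \<Longrightarrow> lin g (fsub x y) = fsub (lin g x) (lin g y)"
proof (rule ext)
  fix Q assume f: "fs x" "fs y"
  let ?S = "supp x \<union> supp y"
  have "lin g (fsub x y) Q = (\<Sum>A\<in>?S. fsub x y A * g A Q)"
    using f supp_fsub by (intro lin_super) auto
  also have "\<dots> = (\<Sum>A\<in>?S. x A * g A Q) - (\<Sum>A\<in>?S. y A * g A Q)"
    by (simp add: fapp left_diff_distrib sum_subtractf)
  also have "\<dots> = lin g x Q - lin g y Q"
    using f by (simp add: lin_super[of ?S])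
  finally show "lin g (fsub x y) Q = fsub (lin g x) (lin g y) Q" by (simp add: fapp)
qed

lemma lin_fneg: "lin g (fneg x) = fneg (lin g x)"
  by (rule ext) (simp add: fapp lin_def sum_negf)

lemma lin_fz: "lin g fz = fz"
  by (rule ext) (simp add: fapp lin_def)

lemma lin_gen: "lin g (gen A) = g A"
  unfolding lin_def supp_gen by (rule ext) (simp add: gen_def)

lemma lin_gadd: "lin (\<lambda>A. fadd (g1 A) (g2 A)) x = fadd (lin g1 x) (lin g2 x)"
  by (rule ext) (simp add: fapp lin_def distrib_left sum.distrib)
lemma lin_gsub: "lin (\<lambda>A. fsub (g1 A) (g2 A)) x = fsub (lin g1 x) (lin g2 x)"
  by (rule ext) (simp add: fapp lin_def right_diff_distrib sum_subtractf)
lemma lin_gneg: "lin (\<lambda>A. fneg (g A)) x = fneg (lin g x)"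
  by (rule ext) (simp add: fapp lin_def sum_negf)
lemma lin_gz: "lin (\<lambda>A. fz) x = fz"
  by (rule ext) (simp add: fapp lin_def)

lemma fs_lin: "fs x \<Longrightarrow> (\<And>A. A \<in> supp x \<Longrightarrow> fs (g A)) \<Longrightarrow> fs (lin g x)"
proof -
  assume a: "fs x" "\<And>A. A \<in> supp x \<Longrightarrow> fs (g A)"
  have "supp (lin g x) \<subseteq> (\<Union>A\<in>supp x. supp (g A))"
  proof
    fix Q assume "Q \<in> supp (lin g x)"
    then have "(\<Sum>A\<in>supp x. x A * g A Q) \<noteq> 0" by (simp add: supp_def lin_def)
    then obtain A where "A \<in> supp x" "x A * g A Q \<noteq> 0" by (metis (no_types, lifting) sum.neutral)
    then have "Q \<in> supp (g A)" by (simp add: supp_def)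
    with \<open>A \<in> supp x\<close> show "Q \<in> (\<Union>A\<in>supp x. supp (g A))" by blast
  qed
  then show ?thesis using a by (meson finite_UN_I rev_finite_subset)
qed

lemma fs_P: "fs x \<Longrightarrow> fs y \<Longrightarrow> fs (P x y)"
  unfolding P_def by (intro fs_lin) auto

lemma P_fadd1: "fs x \<Longrightarrow> fs y \<Longrightarrow> P (fadd x y) z = fadd (P x z) (P y z)"
  unfolding P_def by (simp add: lin_fadd)
lemma P_fsub1: "fs x \<Longrightarrow> fs y \<Longrightarrow> P (fsub x y) z = fsub (P x z) (P y z)"
  unfolding P_def by (simp add: lin_fsub)
lemma P_fneg1: "P (fneg x) z = fneg (P x z)"
  unfolding P_def by (simp add: lin_fneg)
lemma P_fz1: "P fz z = fz"
  unfolding P_def by (simp add: lin_fz)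
lemma P_fadd2: "fs x \<Longrightarrow> fs y \<Longrightarrow> P z (fadd x y) = fadd (P z x) (P z y)"
  unfolding P_def by (simp add: lin_fadd lin_gadd)
lemma P_fsub2: "fs x \<Longrightarrow> fs y \<Longrightarrow> P z (fsub x y) = fsub (P z x) (P z y)"
  unfolding P_def by (simp add: lin_fsub lin_gsub)
lemma P_fneg2: "P z (fneg x) = fneg (P z x)"
  unfolding P_def by (simp add: lin_fneg lin_gneg)
lemma P_fz2: "P z fz = fz"
  unfolding P_def by (simp add: lin_fz lin_gz)
lemma P_gen: "P (gen A) (gen B) = gen (nrack_prod A B)"
  unfolding P_def by (simp add: lin_gen)


lemma np_fst: "fst (nrack_prod A B) = prod_encode ` (fst A \<times> fst B)"
  by (simp add: nrack_prod_def)
lemma np_op[simp]: "snd (nrack_prod A B) (prod_encode (a,b)) (prod_encode (c,d)) = prod_encode (snd A a c, snd B b d)"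
  by (simp add: nrack_prod_def prod_encode_inverse)

lemma bij_enc: "bij_betw k XX YY \<Longrightarrow> bij_betw (\<lambda>u. prod_encode (k (prod_decode u))) (prod_encode ` XX) (prod_encode ` YY)"
proof -
  assume k: "bij_betw k XX YY"
  have d: "bij_betw prod_decode (prod_encode ` XX) XX"
    by (rule bij_betw_imageI) (auto simp: inj_on_def prod_encode_inverse image_image prod_decode_inverse)
  have e: "bij_betw prod_encode YY (prod_encode ` YY)"
    by (rule bij_betw_imageI) (auto simp: inj_on_def prod_encode_eq)
  have "bij_betw (prod_encode \<circ> (k \<circ> prod_decode)) (prod_encode ` XX) (prod_encode ` YY)"
    by (rule bij_betw_trans[OF bij_betw_trans[OF d k] e])
  then show ?thesis by (simp add: comp_def)
qed

lemma is_rack_prod: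
  assumes A: "is_rack SA fa" and B: "is_rack SB fb"
  shows "is_rack (fst (nrack_prod (SA,fa) (SB,fb))) (snd (nrack_prod (SA,fa) (SB,fb)))"
  unfolding is_rack_def np_fst fst_conv
proof (intro conjI ballI)
  fix u assume "u \<in> prod_encode ` (SA \<times> SB)"
  then obtain a b where u: "u = prod_encode (a,b)" "a \<in> SA" "b \<in> SB" by auto
  have "bij_betw (map_prod (fa a) (fb b)) (SA \<times> SB) (SA \<times> SB)"
    using A B u by (intro bij_betw_map_prod) (auto simp: is_rack_def)
  from bij_enc[OF this]
  show "bij_betw (snd (nrack_prod (SA, fa) (SB, fb)) u) (prod_encode ` (SA \<times> SB)) (prod_encode ` (SA \<times> SB))"
    by (rule bij_betw_cong[THEN iffD1, rotated]) (auto simp: u)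
next
  fix u v w assume "u \<in> prod_encode ` (SA \<times> SB)" "v \<in> prod_encode ` (SA \<times> SB)" "w \<in> prod_encode ` (SA \<times> SB)"
  then show "snd (nrack_prod (SA, fa) (SB, fb)) u (snd (nrack_prod (SA, fa) (SB, fb)) v w) =
           snd (nrack_prod (SA, fa) (SB, fb)) (snd (nrack_prod (SA, fa) (SB, fb)) u v)
            (snd (nrack_prod (SA, fa) (SB, fb)) u w)"
    using A B by (auto simp: is_rack_def)
qed

lemma nfinite_prod: "nfinite_rack A \<Longrightarrow> nfinite_rack B \<Longrightarrow> nfinite_rack (nrack_prod A B)"
  using is_rack_prod[of "fst A" "snd A" "fst B" "snd B"]
  by (auto simp: nfinite_rack_def finite_rack_def np_fst)

lemma iso_swap: "rack_iso (fst (nrack_prod A B)) (snd (nrack_prod A B)) (fst (nrack_prod B A)) (snd (nrack_prod B A))"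
  unfolding rack_iso_def np_fst
proof (intro exI conjI)
  let ?h = "\<lambda>u. prod_encode (snd (prod_decode u), fst (prod_decode u))"
  show "bij_betw ?h (prod_encode ` (fst A \<times> fst B)) (prod_encode ` (fst B \<times> fst A))"
    by (rule bij_betw_byWitness[where f'="?h"]) (auto simp: prod_encode_inverse)
  show "\<forall>a\<in>prod_encode ` (fst A \<times> fst B). \<forall>b\<in>prod_encode ` (fst A \<times> fst B).
        ?h (snd (nrack_prod A B) a b) = snd (nrack_prod B A) (?h a) (?h b)"
    by (auto simp: prod_encode_inverse)
qed

lemma iso_assoc: "rack_iso (fst (nrack_prod (nrack_prod A B) C)) (snd (nrack_prod (nrack_prod A B) C))
   (fst (nrack_prod A (nrack_prod B C))) (snd (nrack_prod A (nrack_prod B C)))"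
  unfolding rack_iso_def np_fst
proof (intro exI conjI)
  let ?h = "\<lambda>u. prod_encode (fst (prod_decode (fst (prod_decode u))),
                   prod_encode (snd (prod_decode (fst (prod_decode u))), snd (prod_decode u)))"
  let ?k = "\<lambda>u. prod_encode (prod_encode (fst (prod_decode u), fst (prod_decode (snd (prod_decode u)))),
                   snd (prod_decode (snd (prod_decode u))))"
  show "bij_betw ?h (prod_encode ` (prod_encode ` (fst A \<times> fst B) \<times> fst C))
     (prod_encode ` (fst A \<times> prod_encode ` (fst B \<times> fst C)))"
    by (rule bij_betw_byWitness[where f'="?k"]) (auto simp: prod_encode_inverse)
  show "\<forall>a\<in>prod_encode ` (prod_encode ` (fst A \<times> fst B) \<times> fst C). \<forall>b\<in>prod_encode ` (prod_encode ` (fst A \<times> fst B) \<times> fst C).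
        ?h (snd (nrack_prod (nrack_prod A B) C) a b) = snd (nrack_prod A (nrack_prod B C)) (?h a) (?h b)"
    by (auto simp: prod_encode_inverse)
qed

lemma iso_unit: "rack_iso (fst (nrack_prod star_rack A)) (snd (nrack_prod star_rack A)) (fst A) (snd A)"
  unfolding rack_iso_def np_fst
proof (intro exI conjI)
  let ?h = "\<lambda>u. snd (prod_decode u)"
  let ?k = "\<lambda>a. prod_encode (0, a)"
  show "bij_betw ?h (prod_encode ` (fst star_rack \<times> fst A)) (fst A)"
    by (rule bij_betw_byWitness[where f'="?k"]) (auto simp: prod_encode_inverse star_rack_def)
  show "\<forall>a\<in>prod_encode ` (fst star_rack \<times> fst A). \<forall>b\<in>prod_encode ` (fst star_rack \<times> fst A).
        ?h (snd (nrack_prod star_rack A) a b) = snd A (?h a) (?h b)"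
    by (auto simp: prod_encode_inverse)
qed

lemma iso_right:
  assumes "rack_iso (fst A) (snd A) (fst A') (snd A')"
  shows "rack_iso (fst (nrack_prod A B)) (snd (nrack_prod A B)) (fst (nrack_prod A' B)) (snd (nrack_prod A' B))"
proof -
  from assms obtain k where k: "bij_betw k (fst A) (fst A')"
    "\<forall>a\<in>fst A. \<forall>b\<in>fst A. k (snd A a b) = snd A' (k a) (k b)" by (auto simp: rack_iso_def)
  have "bij_betw (map_prod k id) (fst A \<times> fst B) (fst A' \<times> fst B)"
    using k by (intro bij_betw_map_prod) auto
  from bij_enc[OF this]
  have b: "bij_betw (\<lambda>u. prod_encode (map_prod k id (prod_decode u))) (fst (nrack_prod A B)) (fst (nrack_prod A' B))"
    by (simp add: np_fst)
  show ?thesis unfolding rack_iso_def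
    apply (rule exI, rule conjI, rule b)
    using k(2) by (auto simp: np_fst prod_encode_inverse)
qed

lemma iso_left:
  assumes "rack_iso (fst A) (snd A) (fst A') (snd A')"
  shows "rack_iso (fst (nrack_prod B A)) (snd (nrack_prod B A)) (fst (nrack_prod B A')) (snd (nrack_prod B A'))"
proof -
  from assms obtain k where k: "bij_betw k (fst A) (fst A')"
    "\<forall>a\<in>fst A. \<forall>b\<in>fst A. k (snd A a b) = snd A' (k a) (k b)" by (auto simp: rack_iso_def)
  have "bij_betw (map_prod id k) (fst B \<times> fst A) (fst B \<times> fst A')"
    using k by (intro bij_betw_map_prod) auto
  from bij_enc[OF this]
  have b: "bij_betw (\<lambda>u. prod_encode (map_prod id k (prod_decode u))) (fst (nrack_prod B A)) (fst (nrack_prod B A'))"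
    by (simp add: np_fst)
  show ?thesis unfolding rack_iso_def
    apply (rule exI, rule conjI, rule b)
    using k(2) by (auto simp: np_fst prod_encode_inverse)
qed

lemma subrack_rack: "finite_rack S0 f \<Longrightarrow> subrack T S0 f \<Longrightarrow> finite_rack T f"
  unfolding finite_rack_def is_rack_def subrack_def bij_betw_def
  by (meson finite_subset inj_on_subset subsetD)

lemma subrack_prod_right:
  assumes "subrack T S0 f" "is_rack SB g"
  shows "subrack (prod_encode ` (T \<times> SB)) (prod_encode ` (S0 \<times> SB)) (snd (nrack_prod (S0,f) (SB,g)))"
  unfolding subrack_def
proof (intro conjI ballI)
  show "prod_encode ` (T \<times> SB) \<subseteq> prod_encode ` (S0 \<times> SB)" using assms by (auto simp: subrack_def)
next
  fix s assume "s \<in> prod_encode ` (T \<times> SB)"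
  then obtain t b where s: "s = prod_encode (t,b)" "t \<in> T" "b \<in> SB" by auto
  have "snd (nrack_prod (S0, f) (SB, g)) s ` prod_encode ` (T \<times> SB) = prod_encode ` (map_prod (f t) (g b) ` (T \<times> SB))"
    unfolding image_image s by (rule image_cong) auto
  also have "map_prod (f t) (g b) ` (T \<times> SB) = T \<times> SB"
    using assms s by (intro map_prod_surj_on) (auto simp: subrack_def is_rack_def bij_betw_def)
  finally show "snd (nrack_prod (S0, f) (SB, g)) s ` prod_encode ` (T \<times> SB) = prod_encode ` (T \<times> SB)" .
qed

lemma subrack_prod_left:
  assumes "subrack T S0 f" "is_rack SB g"
  shows "subrack (prod_encode ` (SB \<times> T)) (prod_encode ` (SB \<times> S0)) (snd (nrack_prod (SB,g) (S0,f)))"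
  unfolding subrack_def
proof (intro conjI ballI)
  show "prod_encode ` (SB \<times> T) \<subseteq> prod_encode ` (SB \<times> S0)" using assms by (auto simp: subrack_def)
next
  fix s assume "s \<in> prod_encode ` (SB \<times> T)"
  then obtain t b where s: "s = prod_encode (b,t)" "t \<in> T" "b \<in> SB" by auto
  have "snd (nrack_prod (SB, g) (S0, f)) s ` prod_encode ` (SB \<times> T) = prod_encode ` (map_prod (g b) (f t) ` (SB \<times> T))"
    unfolding image_image s by (rule image_cong) auto
  also have "map_prod (g b) (f t) ` (SB \<times> T) = SB \<times> T"
    using assms s by (intro map_prod_surj_on) (auto simp: subrack_def is_rack_def bij_betw_def)
  finally show "snd (nrack_prod (SB, g) (S0, f)) s ` prod_encode ` (SB \<times> T) = prod_encode ` (SB \<times> T)" .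
qed

lemma decomp_right:
  assumes "finite_rack S0 f" "rack_decomp S0 f T U" "nfinite_rack B"
  shows "finite_rack (fst (nrack_prod (S0,f) B)) (snd (nrack_prod (S0,f) B)) \<and>
    rack_decomp (fst (nrack_prod (S0,f) B)) (snd (nrack_prod (S0,f) B)) (fst (nrack_prod (T,f) B)) (fst (nrack_prod (U,f) B))"
proof -
  obtain SB g where B: "B = (SB, g)" by fastforce
  have r: "is_rack SB g" using assms B by (simp add: nfinite_rack_def finite_rack_def)
  have "finite_rack (fst (nrack_prod (S0,f) B)) (snd (nrack_prod (S0,f) B))"
    using nfinite_prod[of "(S0,f)" B] assms by (simp add: nfinite_rack_def)
  moreover have "rack_decomp (fst (nrack_prod (S0,f) B)) (snd (nrack_prod (S0,f) B)) (fst (nrack_prod (T,f) B)) (fst (nrack_prod (U,f) B))"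
    using assms(2) subrack_prod_right[OF _ r, of T S0 f] subrack_prod_right[OF _ r, of U S0 f]
    unfolding rack_decomp_def B np_fst fst_conv
    by (auto simp: prod_encode_eq)
  ultimately show ?thesis by blast
qed

lemma decomp_left:
  assumes "finite_rack S0 f" "rack_decomp S0 f T U" "nfinite_rack B"
  shows "finite_rack (fst (nrack_prod B (S0,f))) (snd (nrack_prod B (S0,f))) \<and>
    rack_decomp (fst (nrack_prod B (S0,f))) (snd (nrack_prod B (S0,f))) (fst (nrack_prod B (T,f))) (fst (nrack_prod B (U,f)))"
proof -
  obtain SB g where B: "B = (SB, g)" by fastforce
  have r: "is_rack SB g" using assms B by (simp add: nfinite_rack_def finite_rack_def)
  have "finite_rack (fst (nrack_prod B (S0,f))) (snd (nrack_prod B (S0,f)))"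
    using nfinite_prod[of B "(S0,f)"] assms by (simp add: nfinite_rack_def)
  moreover have "rack_decomp (fst (nrack_prod B (S0,f))) (snd (nrack_prod B (S0,f))) (fst (nrack_prod B (T,f))) (fst (nrack_prod B (U,f)))"
    using assms(2) subrack_prod_left[OF _ r, of T S0 f] subrack_prod_left[OF _ r, of U S0 f]
    unfolding rack_decomp_def B np_fst fst_conv
    by (auto simp: prod_encode_eq)
  ultimately show ?thesis by blast
qed


abbreviation "FC \<equiv> free_carrier"
abbreviation "NN \<equiv> burnside_relations"
abbreviation "Rel \<equiv> burnside_relators"

lemma FC_iff: "x \<in> FC \<longleftrightarrow> fs x \<and> (\<forall>R. x R \<noteq> 0 \<longrightarrow> nfinite_rack R)"
  by (simp add: free_carrier_def supp_def)

lemma FC_fs[simp]: "x \<in> FC \<Longrightarrow> fs x" by (simp add: FC_iff)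
lemma gen_FC[simp]: assumes "nfinite_rack A" shows "gen A \<in> FC"
  unfolding FC_iff
proof (intro conjI allI impI)
  show "fs (gen A)" by simp
  fix R assume "gen A R \<noteq> 0"
  then have "R = A" unfolding gen_def by (cases "R = A") simp_all
  then show "nfinite_rack R" using assms by simp
qed
lemma fz_FC[simp]: "fz \<in> FC" unfolding FC_iff by (simp add: fapp supp_def)
lemma fadd_FC[simp]: assumes "x \<in> FC" "y \<in> FC" shows "fadd x y \<in> FC"
proof -
  have "fs (fadd x y)" using assms by simp
  moreover have "nfinite_rack R" if "fadd x y R \<noteq> 0" for R
  proof -
    from that have "x R \<noteq> 0 \<or> y R \<noteq> 0" by (auto simp: fapp)
    then show ?thesis using assms unfolding FC_iff by blast
  qed
  ultimately show ?thesis unfolding FC_iff by blast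
qed
lemma fsub_FC[simp]: assumes "x \<in> FC" "y \<in> FC" shows "fsub x y \<in> FC"
proof -
  have "fs (fsub x y)" using assms by simp
  moreover have "nfinite_rack R" if "fsub x y R \<noteq> 0" for R
  proof -
    from that have "x R \<noteq> 0 \<or> y R \<noteq> 0" by (auto simp: fapp)
    then show ?thesis using assms unfolding FC_iff by blast
  qed
  ultimately show ?thesis unfolding FC_iff by blast
qed
lemma fneg_FC[simp]: "x \<in> FC \<Longrightarrow> fneg x \<in> FC"
  unfolding FC_iff supp_fneg by (simp add: fapp)

lemma fg_mult[simp]: "monoid.mult free_group x y = fadd x y" by (simp add: free_group_def fadd_def)
lemma fg_one[simp]: "one free_group = fz" by (simp add: free_group_def fz_def)
lemma fg_carrier[simp]: "carrier free_group = FC" by (simp add: free_group_def)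

lemma fg_inv: "x \<in> FC \<Longrightarrow> inv\<^bsub>free_group\<^esub> x = fneg x"
  unfolding m_inv_def fg_mult fg_one fg_carrier
proof (rule the_equality)
  assume "x \<in> FC" then show "fneg x \<in> FC \<and> fadd x (fneg x) = fz \<and> fadd (fneg x) x = fz"
    by (auto simp: fun_eq_iff fapp)
next
  fix y assume "y \<in> FC \<and> fadd x y = fz \<and> fadd y x = fz"
  then show "y = fneg x" by (auto simp: fun_eq_iff fapp) (metis add_eq_0_iff)
qed

lemma rel_iso: "nfinite_rack R1 \<Longrightarrow> nfinite_rack R2 \<Longrightarrow> rack_iso (fst R1) (snd R1) (fst R2) (snd R2)
   \<Longrightarrow> fsub (gen R1) (gen R2) \<in> Rel"
  unfolding burnside_relators_def fsub_def by (intro UnI1 CollectI exI conjI) (rule refl | assumption)+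

lemma rel_dec: "finite_rack S0 f \<Longrightarrow> rack_decomp S0 f T U \<Longrightarrow>
   fsub (fsub (gen (S0,f)) (gen (T,f))) (gen (U,f)) \<in> Rel"
proof -
  assume a: "finite_rack S0 f" "rack_decomp S0 f T U"
  have e: "fsub (fsub (gen (S0,f)) (gen (T,f))) (gen (U,f)) = (\<lambda>Q. gen (S0, f) Q - gen (T, f) Q - gen (U, f) Q)"
    by (simp add: fun_eq_iff fapp)
  have "(\<lambda>Q. gen (S0, f) Q - gen (T, f) Q - gen (U, f) Q) \<in> {(\<lambda>Q. gen (S0, f) Q - gen (T, f) Q - gen (U, f) Q) | S0 f T U. finite_rack S0 f \<and> rack_decomp S0 f T U}"
    using a by blast
  then show ?thesis unfolding e burnside_relators_def by (rule UnI2)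
qed

lemma rel_cases: "h \<in> Rel \<Longrightarrow>
  (\<exists>R1 R2. nfinite_rack R1 \<and> nfinite_rack R2 \<and> rack_iso (fst R1) (snd R1) (fst R2) (snd R2) \<and> h = fsub (gen R1) (gen R2))
  \<or> (\<exists>S0 f T U. finite_rack S0 f \<and> rack_decomp S0 f T U \<and> h = fsub (fsub (gen (S0,f)) (gen (T,f))) (gen (U,f)))"
proof -
  assume "h \<in> Rel"
  then show ?thesis unfolding burnside_relators_def
  proof (elim UnE)
    assume "h \<in> {(\<lambda>Q. gen R1 Q - gen R2 Q) | R1 R2.
        nfinite_rack R1 \<and> nfinite_rack R2 \<and> rack_iso (fst R1) (snd R1) (fst R2) (snd R2)}"
    then have "\<exists>R1 R2. h = (\<lambda>Q. gen R1 Q - gen R2 Q) \<and> nfinite_rack R1 \<and> nfinite_rack R2 \<and> rack_iso (fst R1) (snd R1) (fst R2) (snd R2)"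
      by (simp only: mem_Collect_eq)
    then obtain R1 R2 where o: "h = (\<lambda>Q. gen R1 Q - gen R2 Q)" "nfinite_rack R1" "nfinite_rack R2" "rack_iso (fst R1) (snd R1) (fst R2) (snd R2)"
      by (elim exE conjE) (rule that; assumption)
    have "h = fsub (gen R1) (gen R2)" using o(1) by (simp add: fsub_def)
    then show ?thesis using o(2-4) by (intro disjI1 exI conjI)
  next
    assume "h \<in> {(\<lambda>Q. gen (S0, f) Q - gen (T, f) Q - gen (U, f) Q) | S0 f T U.
        finite_rack S0 f \<and> rack_decomp S0 f T U}"
    then have "\<exists>S0 f T U. h = (\<lambda>Q. gen (S0, f) Q - gen (T, f) Q - gen (U, f) Q) \<and> finite_rack S0 f \<and> rack_decomp S0 f T U"
      by (simp only: mem_Collect_eq)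
    then obtain S0 f T U where o: "h = (\<lambda>Q. gen (S0, f) Q - gen (T, f) Q - gen (U, f) Q)" "finite_rack S0 f" "rack_decomp S0 f T U"
      by (elim exE conjE) (rule that; assumption)
    have "h = fsub (fsub (gen (S0,f)) (gen (T,f))) (gen (U,f))" using o(1) by (simp add: fsub_def)
    then show ?thesis using o(2-3) by (intro disjI2 exI conjI)
  qed
qed

lemma dec_nf: "finite_rack S0 f \<Longrightarrow> rack_decomp S0 f T U \<Longrightarrow> nfinite_rack (S0,f) \<and> nfinite_rack (T,f) \<and> nfinite_rack (U,f)"
proof -
  assume fr: "finite_rack S0 f" and d: "rack_decomp S0 f T U"
  from d have "subrack T S0 f" "subrack U S0 f" unfolding rack_decomp_def by simp_all
  then have "finite_rack T f" "finite_rack U f" using subrack_rack[OF fr] by simp_all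
  then show ?thesis using fr by (simp add: nfinite_rack_def)
qed

lemma Rel_FC: "h \<in> Rel \<Longrightarrow> h \<in> FC"
proof -
  assume "h \<in> Rel"
  from rel_cases[OF this] show ?thesis
  proof (elim disjE exE conjE)
    fix R1 R2 assume "nfinite_rack R1" "nfinite_rack R2" "h = fsub (gen R1) (gen R2)"
    then show ?thesis by simp
  next
    fix S0 f T U assume a: "finite_rack S0 f" "rack_decomp S0 f T U" "h = fsub (fsub (gen (S0,f)) (gen (T,f))) (gen (U,f))"
    from dec_nf[OF a(1,2)] a(3) show ?thesis by simp
  qed
qed

lemma NN_FC: "n \<in> NN \<Longrightarrow> n \<in> FC"
  unfolding burnside_relations_def
proof (induct rule: generate.induct)
  case one then show ?case by simp
next
  case (incl h) then show ?case by (rule Rel_FC)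
next
  case (inv h) then show ?case using Rel_FC[OF inv] by (simp add: fg_inv)
next
  case (eng h1 h2) then show ?case by simp
qed

lemma NN_fz[simp]: "fz \<in> NN"
  unfolding burnside_relations_def using generate.one[of free_group] by simp
lemma NN_Rel: "h \<in> Rel \<Longrightarrow> h \<in> NN"
  unfolding burnside_relations_def by (rule generate.incl)
lemma NN_fadd[simp]: "a \<in> NN \<Longrightarrow> b \<in> NN \<Longrightarrow> fadd a b \<in> NN"
  unfolding burnside_relations_def using generate.eng[of _ free_group] by simp
lemma fneg_fneg[simp]: "fneg (fneg x) = x" by (simp add: fun_eq_iff fapp)
lemma NN_fneg[simp]: "a \<in> NN \<Longrightarrow> fneg a \<in> NN"
  unfolding burnside_relations_def
proof (induct rule: generate.induct)
  case one then show ?case using generate.one[of free_group] by (simp add: fneg_def fz_def)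
next
  case (incl h) then show ?case using generate.inv[of h Rel free_group] by (simp add: fg_inv Rel_FC)
next
  case (inv h) then show ?case using generate.incl[of h Rel free_group] by (simp add: fg_inv Rel_FC)
next
  case (eng h1 h2)
  have "fneg (fadd h1 h2) = fadd (fneg h1) (fneg h2)" by (simp add: fun_eq_iff fapp)
  then show ?case using eng generate.eng[of _ free_group] by simp
qed
lemma fsub_eq: "fsub a b = fadd a (fneg b)" by (simp add: fun_eq_iff fapp)
lemma NN_fsub[simp]: "a \<in> NN \<Longrightarrow> b \<in> NN \<Longrightarrow> fsub a b \<in> NN"
  by (simp add: fsub_eq)

lemma NN_induct[consumes 1, case_names zero rel nrel add]:
  assumes "n \<in> NN" "Q fz" "\<And>h. h \<in> Rel \<Longrightarrow> Q h" "\<And>h. h \<in> Rel \<Longrightarrow> Q (fneg h)"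
    "\<And>a b. a \<in> NN \<Longrightarrow> b \<in> NN \<Longrightarrow> Q a \<Longrightarrow> Q b \<Longrightarrow> Q (fadd a b)"
  shows "Q n"
  using assms(1) unfolding burnside_relations_def
proof (induct rule: generate.induct)
  case one then show ?case using assms(2) by simp
next
  case (incl h) then show ?case using assms(3) by simp
next
  case (inv h) then show ?case using assms(4) by (simp add: fg_inv Rel_FC)
next
  case (eng h1 h2) then show ?case using assms(5) unfolding burnside_relations_def by simp
qed

lemma FC_induct[consumes 1, case_names zero add sub]:
  assumes x: "x \<in> FC" and z: "Q fz"
    and a: "\<And>x A. x \<in> FC \<Longrightarrow> Q x \<Longrightarrow> nfinite_rack A \<Longrightarrow> Q (fadd x (gen A))"
    and s: "\<And>x A. x \<in> FC \<Longrightarrow> Q x \<Longrightarrow> nfinite_rack A \<Longrightarrow> Q (fsub x (gen A))"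
  shows "Q x"
proof -
  have "\<forall>x. x \<in> FC \<and> supp x \<subseteq> S \<longrightarrow> Q x" if "finite S" for S
    using that
  proof (induct S rule: finite_induct)
    case empty
    { fix x assume "x \<in> FC \<and> supp x \<subseteq> {}"
      then have "x = fz" by (auto simp: fun_eq_iff fapp supp_def)
      then have "Q x" using z by simp }
    then show ?case by blast
  next
    case (insert A S)
    show ?case
    proof (intro allI impI)
      fix x assume xx: "x \<in> FC \<and> supp x \<subseteq> insert A S"
      define x0 where "x0 = x(A := 0)"
      have sx0: "supp x0 \<subseteq> S" using xx insert(2) by (auto simp: x0_def supp_def)
      have x0: "x0 \<in> FC" "supp x0 \<subseteq> S" using xx sx0 insert(1) unfolding FC_iff
        by (auto simp: x0_def intro: finite_subset)
      then have Q0: "Q x0" using insert by blast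
      show "Q x"
      proof (cases "x A = 0")
        case True
        then have "x = x0" by (auto simp: x0_def)
        then show ?thesis using Q0 by simp
      next
        case False
        then have nA: "nfinite_rack A" using xx unfolding FC_iff by blast
        have inFC: "x0(A := c) \<in> FC" for c
        proof -
          have "supp (x0(A := c)) \<subseteq> insert A (supp x0)" by (auto simp: supp_def)
          then have "fs (x0(A := c))" using x0 by (meson finite_insert FC_fs finite_subset)
          moreover have "nfinite_rack R" if "(x0(A := c)) R \<noteq> 0" for R
          proof (cases "R = A")
            case True then show ?thesis using nA by simp
          next
            case False then have "x0 R \<noteq> 0" using that by simp
            then show ?thesis using x0(1) unfolding FC_iff by blast
          qed
          ultimately show ?thesis unfolding FC_iff by blast
        qed
        have "Q (x0(A := c))" for c
        proof (induct c rule: int_induct[where k=0])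
          case base
          have "x0(A := 0) = x0" by (simp only: x0_def fun_upd_upd)
          then show ?case using Q0 by simp
        next
          case (step1 i)
          have eq: "x0(A := i + 1) = fadd (x0(A := i)) (gen A)" by (auto simp: fun_eq_iff fapp gen_def)
          show ?case unfolding eq by (rule a[OF inFC step1(2) nA])
        next
          case (step2 i)
          have eq: "x0(A := i - 1) = fsub (x0(A := i)) (gen A)" by (auto simp: fun_eq_iff fapp gen_def)
          show ?case unfolding eq by (rule s[OF inFC step2(2) nA])
        qed
        then have "Q (x0(A := x A))" .
        moreover have "x0(A := x A) = x" by (simp add: x0_def)
        ultimately show ?thesis by simp
      qed
    qed
  qed
  then show ?thesis using x FC_fs[OF x] by blast
qed


lemma fs_gen[simp]: "fs (gen A)" by simp

lemma np_same_op_r: "\<exists>T'. nrack_prod (T,f) B = (T', snd (nrack_prod (S0,f) B))"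
  by (simp add: nrack_prod_def)
lemma np_same_op_l: "\<exists>T'. nrack_prod B (T,f) = (T', snd (nrack_prod B (S0,f)))"
  by (simp add: nrack_prod_def)

lemma rel_times_right:
  assumes h: "h \<in> Rel" and B: "nfinite_rack B"
  shows "P h (gen B) \<in> Rel"
  using rel_cases[OF h]
proof (elim disjE exE conjE)
  fix R1 R2 assume a: "nfinite_rack R1" "nfinite_rack R2" "rack_iso (fst R1) (snd R1) (fst R2) (snd R2)"
    "h = fsub (gen R1) (gen R2)"
  have "P h (gen B) = fsub (gen (nrack_prod R1 B)) (gen (nrack_prod R2 B))"
    by (simp add: a(4) P_fsub1 P_gen)
  moreover have "fsub (gen (nrack_prod R1 B)) (gen (nrack_prod R2 B)) \<in> Rel"
    by (rule rel_iso) (simp_all add: nfinite_prod a B iso_right)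
  ultimately show ?thesis by simp
next
  fix S0 f T U assume a: "finite_rack S0 f" "rack_decomp S0 f T U"
    "h = fsub (fsub (gen (S0, f)) (gen (T, f))) (gen (U, f))"
  obtain S0' F where e1: "nrack_prod (S0,f) B = (S0', F)" by (cases "nrack_prod (S0,f) B")
  obtain T' where e2: "nrack_prod (T,f) B = (T', F)" using np_same_op_r[of T f B S0] e1 by auto
  obtain U' where e3: "nrack_prod (U,f) B = (U', F)" using np_same_op_r[of U f B S0] e1 by auto
  have "P h (gen B) = fsub (fsub (gen (nrack_prod (S0,f) B)) (gen (nrack_prod (T,f) B))) (gen (nrack_prod (U,f) B))"
    by (simp add: a(3) P_fsub1 P_gen)
  also have "\<dots> = fsub (fsub (gen (S0', F)) (gen (T', F))) (gen (U', F))"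
    by (simp only: e1 e2 e3)
  finally have eq: "P h (gen B) = fsub (fsub (gen (S0', F)) (gen (T', F))) (gen (U', F))" .
  have "finite_rack S0' F" "rack_decomp S0' F T' U'"
    using decomp_right[OF a(1,2) B] by (simp_all add: e1 e2 e3)
  then show ?thesis unfolding eq by (rule rel_dec)
qed

lemma rel_times_left:
  assumes h: "h \<in> Rel" and B: "nfinite_rack B"
  shows "P (gen B) h \<in> Rel"
  using rel_cases[OF h]
proof (elim disjE exE conjE)
  fix R1 R2 assume a: "nfinite_rack R1" "nfinite_rack R2" "rack_iso (fst R1) (snd R1) (fst R2) (snd R2)"
    "h = fsub (gen R1) (gen R2)"
  have "P (gen B) h = fsub (gen (nrack_prod B R1)) (gen (nrack_prod B R2))"
    by (simp add: a(4) P_fsub2 P_gen)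
  moreover have "fsub (gen (nrack_prod B R1)) (gen (nrack_prod B R2)) \<in> Rel"
    by (rule rel_iso) (simp_all add: nfinite_prod a B iso_left)
  ultimately show ?thesis by simp
next
  fix S0 f T U assume a: "finite_rack S0 f" "rack_decomp S0 f T U"
    "h = fsub (fsub (gen (S0, f)) (gen (T, f))) (gen (U, f))"
  obtain S0' F where e1: "nrack_prod B (S0,f) = (S0', F)" by (cases "nrack_prod B (S0,f)")
  obtain T' where e2: "nrack_prod B (T,f) = (T', F)" using np_same_op_l[of B T f S0] e1 by auto
  obtain U' where e3: "nrack_prod B (U,f) = (U', F)" using np_same_op_l[of B U f S0] e1 by auto
  have "P (gen B) h = fsub (fsub (gen (nrack_prod B (S0,f))) (gen (nrack_prod B (T,f)))) (gen (nrack_prod B (U,f)))"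
    by (simp add: a(3) P_fsub2 P_gen)
  also have "\<dots> = fsub (fsub (gen (S0', F)) (gen (T', F))) (gen (U', F))"
    by (simp only: e1 e2 e3)
  finally have eq: "P (gen B) h = fsub (fsub (gen (S0', F)) (gen (T', F))) (gen (U', F))" .
  have "finite_rack S0' F" "rack_decomp S0' F T' U'"
    using decomp_left[OF a(1,2) B] by (simp_all add: e1 e2 e3)
  then show ?thesis unfolding eq by (rule rel_dec)
qed

lemmas Psimps = P_fadd1 P_fadd2 P_fsub1 P_fsub2 P_fneg1 P_fneg2 P_fz1 P_fz2 P_gen fs_P

lemma relP_right: assumes h: "h \<in> Rel" and y: "y \<in> FC" shows "P h y \<in> NN"
  using y
proof (induct rule: FC_induct)
  case zero then show ?case by (simp add: P_fz2)
next
  case (add y A)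
  then show ?case using rel_times_right[OF h add(3)] Rel_FC[OF h] by (simp add: P_fadd2 NN_Rel)
next
  case (sub y A)
  then show ?case using rel_times_right[OF h sub(3)] Rel_FC[OF h] by (simp add: P_fsub2 NN_Rel)
qed

lemma relP_left: assumes h: "h \<in> Rel" and y: "y \<in> FC" shows "P y h \<in> NN"
  using y
proof (induct rule: FC_induct)
  case zero then show ?case by (simp add: P_fz1)
next
  case (add y A)
  then show ?case using rel_times_left[OF h add(3)] Rel_FC[OF h] by (simp add: P_fadd1 NN_Rel)
next
  case (sub y A)
  then show ?case using rel_times_left[OF h sub(3)] Rel_FC[OF h] by (simp add: P_fsub1 NN_Rel)
qed

lemma NN_P_right: assumes n: "n \<in> NN" and y: "y \<in> FC" shows "P n y \<in> NN"
  using n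
proof (induct rule: NN_induct)
  case zero then show ?case by (simp add: P_fz1)
next
  case (rel h) then show ?case using relP_right[OF _ y] by simp
next
  case (nrel h) then show ?case using relP_right[OF _ y] by (simp add: P_fneg1)
next
  case (add a b) then show ?case using NN_FC[of a] NN_FC[of b] by (simp add: P_fadd1)
qed

lemma NN_P_left: assumes n: "n \<in> NN" and y: "y \<in> FC" shows "P y n \<in> NN"
  using n
proof (induct rule: NN_induct)
  case zero then show ?case by (simp add: P_fz2)
next
  case (rel h) then show ?case using relP_left[OF _ y] by simp
next
  case (nrel h) then show ?case using relP_left[OF _ y] by (simp add: P_fneg2)
next
  case (add a b) then show ?case using NN_FC[of a] NN_FC[of b] by (simp add: P_fadd2)
qed

lemma P_FC: assumes x: "x \<in> FC" and y: "y \<in> FC" shows "P x y \<in> FC"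
  using x
proof (induct rule: FC_induct)
  case zero then show ?case by (simp add: P_fz1)
next
  case (add x A)
  have "P (gen A) y \<in> FC" using y
  proof (induct rule: FC_induct)
    case zero then show ?case by (simp add: P_fz2)
  next
    case (add y B) then show ?case using \<open>nfinite_rack A\<close> by (simp add: P_fadd2 P_gen nfinite_prod)
  next
    case (sub y B) then show ?case using \<open>nfinite_rack A\<close> by (simp add: P_fsub2 P_gen nfinite_prod)
  qed
  then show ?case using add by (simp add: P_fadd1)
next
  case (sub x A)
  have "P (gen A) y \<in> FC" using y
  proof (induct rule: FC_induct)
    case zero then show ?case by (simp add: P_fz2)
  next
    case (add y B) then show ?case using \<open>nfinite_rack A\<close> by (simp add: P_fadd2 P_gen nfinite_prod)
  next
    case (sub y B) then show ?case using \<open>nfinite_rack A\<close> by (simp add: P_fsub2 P_gen nfinite_prod)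
  qed
  then show ?case using sub by (simp add: P_fsub1)
qed

lemma fsub_fadd_fadd: "fsub (fadd a b) (fadd c d) = fadd (fsub a c) (fsub b d)"
  by (simp add: fun_eq_iff fapp)
lemma fsub_fsub_fsub: "fsub (fsub a b) (fsub c d) = fsub (fsub a c) (fsub b d)"
  by (simp add: fun_eq_iff fapp)
lemma fsub_fz_fz: "fsub fz fz = fz"
  by (simp add: fun_eq_iff fapp)

lemma NN_fsub4: "fsub a c \<in> NN \<Longrightarrow> fsub b d \<in> NN \<Longrightarrow> fsub (fsub a b) (fsub c d) \<in> NN"
  by (subst fsub_fsub_fsub) (rule NN_fsub)
lemmas lsimps = fsub_fadd_fadd NN_fsub4 fsub_fz_fz

lemma nf_star: "nfinite_rack star_rack"
  by (simp add: nfinite_rack_def finite_rack_def is_rack_def star_rack_def bij_betw_def inj_on_def)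

lemma unit_NN: assumes x: "x \<in> FC" shows "fsub (P (gen star_rack) x) x \<in> NN"
  using x
proof (induct rule: FC_induct)
  case zero then show ?case by (simp add: P_fz2 fsub_fz_fz)
next
  case (add x A)
  have "fsub (gen (nrack_prod star_rack A)) (gen A) \<in> NN"
    by (rule NN_Rel, rule rel_iso) (simp_all add: add nf_star nfinite_prod iso_unit)
  then show ?case using add by (simp add: P_fadd2 P_gen lsimps)
next
  case (sub x A)
  have "fsub (gen (nrack_prod star_rack A)) (gen A) \<in> NN"
    by (rule NN_Rel, rule rel_iso) (simp_all add: sub nf_star nfinite_prod iso_unit)
  then show ?case using sub by (simp add: P_fsub2 P_gen lsimps)
qed

lemma comm_NN: assumes x: "x \<in> FC" and y: "y \<in> FC" shows "fsub (P x y) (P y x) \<in> NN"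
  using x
proof (induct rule: FC_induct)
  case zero then show ?case by (simp add: P_fz1 P_fz2 fsub_fz_fz)
next
  case (add x A)
  have "fsub (P (gen A) y) (P y (gen A)) \<in> NN" using y
  proof (induct rule: FC_induct)
    case zero then show ?case by (simp add: P_fz1 P_fz2 fsub_fz_fz)
  next
    case (add y B)
    have "fsub (gen (nrack_prod A B)) (gen (nrack_prod B A)) \<in> NN"
      by (rule NN_Rel, rule rel_iso) (simp_all add: add \<open>nfinite_rack A\<close> nfinite_prod iso_swap)
    then show ?case using add by (simp add: P_fadd1 P_fadd2 P_gen lsimps)
  next
    case (sub y B)
    have "fsub (gen (nrack_prod A B)) (gen (nrack_prod B A)) \<in> NN"
      by (rule NN_Rel, rule rel_iso) (simp_all add: sub \<open>nfinite_rack A\<close> nfinite_prod iso_swap)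
    then show ?case using sub by (simp add: P_fsub1 P_fsub2 P_gen lsimps)
  qed
  then show ?case using add y by (simp add: P_fadd1 P_fadd2 lsimps)
next
  case (sub x A)
  have "fsub (P (gen A) y) (P y (gen A)) \<in> NN" using y
  proof (induct rule: FC_induct)
    case zero then show ?case by (simp add: P_fz1 P_fz2 fsub_fz_fz)
  next
    case (add y B)
    have "fsub (gen (nrack_prod A B)) (gen (nrack_prod B A)) \<in> NN"
      by (rule NN_Rel, rule rel_iso) (simp_all add: add \<open>nfinite_rack A\<close> nfinite_prod iso_swap)
    then show ?case using add by (simp add: P_fadd1 P_fadd2 P_gen lsimps)
  next
    case (sub y B)
    have "fsub (gen (nrack_prod A B)) (gen (nrack_prod B A)) \<in> NN"
      by (rule NN_Rel, rule rel_iso) (simp_all add: sub \<open>nfinite_rack A\<close> nfinite_prod iso_swap)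
    then show ?case using sub by (simp add: P_fsub1 P_fsub2 P_gen lsimps)
  qed
  then show ?case using sub y by (simp add: P_fsub1 P_fsub2 lsimps)
qed

lemma assoc3: assumes A: "nfinite_rack A" and B: "nfinite_rack B" and z: "z \<in> FC"
  shows "fsub (P (P (gen A) (gen B)) z) (P (gen A) (P (gen B) z)) \<in> NN"
  using z
proof (induct rule: FC_induct)
  case zero then show ?case by (simp add: P_fz2 fsub_fz_fz)
next
  case (add z C)
  have "fsub (gen (nrack_prod (nrack_prod A B) C)) (gen (nrack_prod A (nrack_prod B C))) \<in> NN"
    by (rule NN_Rel, rule rel_iso) (simp_all add: add A B nfinite_prod iso_assoc)
  then show ?case using add by (simp add: P_fadd2 P_gen fs_P lsimps)
next
  case (sub z C)
  have "fsub (gen (nrack_prod (nrack_prod A B) C)) (gen (nrack_prod A (nrack_prod B C))) \<in> NN"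
    by (rule NN_Rel, rule rel_iso) (simp_all add: sub A B nfinite_prod iso_assoc)
  then show ?case using sub by (simp add: P_fsub2 P_gen fs_P lsimps)
qed

lemma assoc2: assumes A: "nfinite_rack A" and y: "y \<in> FC" and z: "z \<in> FC"
  shows "fsub (P (P (gen A) y) z) (P (gen A) (P y z)) \<in> NN"
  using y
proof (induct rule: FC_induct)
  case zero then show ?case by (simp add: P_fz1 P_fz2 fsub_fz_fz)
next
  case (add y B)
  then show ?case using assoc3[OF A add(3) z] z by (simp add: P_fadd1 P_fadd2 P_gen fs_P lsimps)
next
  case (sub y B)
  then show ?case using assoc3[OF A sub(3) z] z by (simp add: P_fsub1 P_fsub2 P_gen fs_P lsimps)
qed

lemma assoc_NN: assumes x: "x \<in> FC" and y: "y \<in> FC" and z: "z \<in> FC"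
  shows "fsub (P (P x y) z) (P x (P y z)) \<in> NN"
  using x
proof (induct rule: FC_induct)
  case zero then show ?case by (simp add: P_fz1 fsub_fz_fz)
next
  case (add x A)
  then show ?case using assoc2[OF add(3) y z] y z by (simp add: P_fadd1 fs_P lsimps)
next
  case (sub x A)
  then show ?case using assoc2[OF sub(3) y z] y z by (simp add: P_fsub1 fs_P lsimps)
qed

definition cls :: "(nrack \<Rightarrow> int) \<Rightarrow> (nrack \<Rightarrow> int) set" where
  "cls x = NN #>\<^bsub>free_group\<^esub> x"

lemma cls_alt: "cls x = (\<lambda>n. fadd n x) ` NN"
  unfolding cls_def r_coset_def by auto

lemma fadd_assoc: "fadd (fadd a b) c = fadd a (fadd b c)" by (simp add: fun_eq_iff fapp)
lemma fadd_comm: "fadd a b = fadd b a" by (simp add: fun_eq_iff fapp)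
lemma fadd_fz: "fadd fz a = a" "fadd a fz = a" by (simp_all add: fun_eq_iff fapp)
lemma fadd_fneg: "fadd (fneg a) a = fz" by (simp add: fun_eq_iff fapp)
lemma fadd4: "fadd (fadd n x) (fadd m y) = fadd (fadd n m) (fadd x y)" by (simp add: fun_eq_iff fapp)

lemma cls_mult: assumes "x \<in> FC" "y \<in> FC" shows "cls x <#>\<^bsub>free_group\<^esub> cls y = cls (fadd x y)"
proof (intro equalityI subsetI)
    fix u
    assume "u \<in> cls x <#>\<^bsub>free_group\<^esub> cls y"
    then obtain n m where nm: "n \<in> NN" "m \<in> NN" "u = fadd (fadd n x) (fadd m y)"
      unfolding set_mult_def cls_alt by auto
    then have "u = fadd (fadd n m) (fadd x y)" by (simp add: fadd4)
    then show "u \<in> cls (fadd x y)" unfolding cls_alt using nm by auto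
  next
    fix u
    assume "u \<in> cls (fadd x y)"
    then obtain n where n: "n \<in> NN" "u = fadd n (fadd x y)" unfolding cls_alt by auto
    then have "u = fadd (fadd n x) (fadd fz y)" by (simp add: fadd_fz fadd_assoc)
    moreover have "fadd n x \<in> cls x" "fadd fz y \<in> cls y" using n unfolding cls_alt by auto
    ultimately show "u \<in> cls x <#>\<^bsub>free_group\<^esub> cls y" unfolding set_mult_def by auto
qed

lemma cls_eq_iff: assumes "x \<in> FC" "y \<in> FC" shows "cls x = cls y \<longleftrightarrow> fsub x y \<in> NN"
proof
  assume "cls x = cls y"
  moreover have "x \<in> cls x" unfolding cls_alt using NN_fz by (metis fadd_fz(1) image_eqI)
  ultimately obtain n where "n \<in> NN" "x = fadd n y" unfolding cls_alt by auto
  moreover have "fsub (fadd n y) y = n" by (simp add: fun_eq_iff fapp)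
  ultimately show "fsub x y \<in> NN" by simp
next
  assume d: "fsub x y \<in> NN"
  have 1: "fadd n x = fadd (fadd n (fsub x y)) y" for n by (simp add: fun_eq_iff fapp)
  have 2: "fadd n y = fadd (fadd n (fneg (fsub x y))) x" for n by (simp add: fun_eq_iff fapp)
  show "cls x = cls y" unfolding cls_alt
  proof (intro equalityI subsetI)
    fix u assume "u \<in> (\<lambda>n. fadd n x) ` NN"
    then obtain n where "n \<in> NN" "u = fadd n x" by auto
    then show "u \<in> (\<lambda>n. fadd n y) ` NN" using d 1[of n] by auto
  next
    fix u assume "u \<in> (\<lambda>n. fadd n y) ` NN"
    then obtain n where "n \<in> NN" "u = fadd n y" by auto
    then show "u \<in> (\<lambda>n. fadd n x) ` NN" using d 2[of n] by auto
  qed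
qed

definition rep :: "(nrack \<Rightarrow> int) set \<Rightarrow> (nrack \<Rightarrow> int)" where
  "rep A = (SOME x. x \<in> FC \<and> A = cls x)"

definition mulB :: "(nrack \<Rightarrow> int) set \<Rightarrow> (nrack \<Rightarrow> int) set \<Rightarrow> (nrack \<Rightarrow> int) set" where
  "mulB A B = cls (P (rep A) (rep B))"

lemma rep_cls: "x \<in> FC \<Longrightarrow> rep (cls x) \<in> FC \<and> cls (rep (cls x)) = cls x"
proof -
  assume x: "x \<in> FC"
  have "rep (cls x) \<in> FC \<and> cls x = cls (rep (cls x))"
    unfolding rep_def by (rule someI[of _ x]) (simp add: x)
  then show ?thesis by simp
qed

lemma mulB_cls: assumes x: "x \<in> FC" and y: "y \<in> FC" shows "mulB (cls x) (cls y) = cls (P x y)"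
proof -
  define x' where "x' = rep (cls x)"
  define y' where "y' = rep (cls y)"
  have x': "x' \<in> FC" "fsub x' x \<in> NN" using rep_cls[OF x] cls_eq_iff[of x' x] x unfolding x'_def by auto
  have y': "y' \<in> FC" "fsub y' y \<in> NN" using rep_cls[OF y] cls_eq_iff[of y' y] y unfolding y'_def by auto
  have "fsub (P x' y') (P x y) = fadd (P (fsub x' x) y') (P x (fsub y' y))"
    using x y x' y' by (simp add: P_fsub1 P_fsub2 fun_eq_iff fapp)
  moreover have "fadd (P (fsub x' x) y') (P x (fsub y' y)) \<in> NN"
    using NN_P_right[OF x'(2) y'(1)] NN_P_left[OF y'(2) x] by simp
  ultimately have "fsub (P x' y') (P x y) \<in> NN" by simp
  then have "cls (P x' y') = cls (P x y)"
    using cls_eq_iff P_FC x y x' y' by blast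
  then show ?thesis unfolding mulB_def x'_def y'_def .
qed

abbreviation "CC \<equiv> cls ` FC"

lemma L_add_closed: "x \<in> CC \<Longrightarrow> y \<in> CC \<Longrightarrow> x <#>\<^bsub>free_group\<^esub> y \<in> CC"
  by (auto simp: cls_mult)
lemma L_add_assoc: "x \<in> CC \<Longrightarrow> y \<in> CC \<Longrightarrow> z \<in> CC \<Longrightarrow>
   (x <#>\<^bsub>free_group\<^esub> y) <#>\<^bsub>free_group\<^esub> z = x <#>\<^bsub>free_group\<^esub> (y <#>\<^bsub>free_group\<^esub> z)"
  by (auto simp: cls_mult fadd_assoc)
lemma L_add_comm: "x \<in> CC \<Longrightarrow> y \<in> CC \<Longrightarrow> x <#>\<^bsub>free_group\<^esub> y = y <#>\<^bsub>free_group\<^esub> x"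
  by (auto simp: cls_mult fadd_comm)
lemma L_zero_closed: "cls fz \<in> CC" by simp
lemma L_zero: "x \<in> CC \<Longrightarrow> cls fz <#>\<^bsub>free_group\<^esub> x = x"
  by (auto simp: cls_mult fadd_fz)
lemma L_inv: "x \<in> CC \<Longrightarrow> \<exists>y\<in>CC. y <#>\<^bsub>free_group\<^esub> x = cls fz"
proof -
  assume "x \<in> CC"
  then obtain a where a: "a \<in> FC" "x = cls a" by auto
  then have "cls (fneg a) <#>\<^bsub>free_group\<^esub> x = cls fz" by (simp add: cls_mult fadd_fneg)
  moreover have "cls (fneg a) \<in> CC" using a by simp
  ultimately show ?thesis by blast
qed
lemma L_mul_closed: "x \<in> CC \<Longrightarrow> y \<in> CC \<Longrightarrow> mulB x y \<in> CC"
  by (auto simp: mulB_cls P_FC)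
lemma L_one_closed: "cls (gen star_rack) \<in> CC" by (simp add: nf_star)
lemma L_mul_assoc: "x \<in> CC \<Longrightarrow> y \<in> CC \<Longrightarrow> z \<in> CC \<Longrightarrow> mulB (mulB x y) z = mulB x (mulB y z)"
proof -
  assume "x \<in> CC" "y \<in> CC" "z \<in> CC"
  then obtain a b c where abc: "a \<in> FC" "b \<in> FC" "c \<in> FC" "x = cls a" "y = cls b" "z = cls c" by blast
  have "cls (P (P a b) c) = cls (P a (P b c))"
    using abc assoc_NN[of a b c] by (simp add: P_FC cls_eq_iff)
  then show ?thesis using abc by (simp add: mulB_cls P_FC)
qed
lemma L_mul_comm: "x \<in> CC \<Longrightarrow> y \<in> CC \<Longrightarrow> mulB x y = mulB y x"
proof -
  assume "x \<in> CC" "y \<in> CC"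
  then obtain a b where abc: "a \<in> FC" "b \<in> FC" "x = cls a" "y = cls b" by blast
  have "cls (P a b) = cls (P b a)"
    using abc comm_NN[of a b] by (simp add: P_FC cls_eq_iff)
  then show ?thesis using abc by (simp add: mulB_cls P_FC)
qed
lemma L_one: "x \<in> CC \<Longrightarrow> mulB (cls (gen star_rack)) x = x"
proof -
  assume "x \<in> CC"
  then obtain a where abc: "a \<in> FC" "x = cls a" by blast
  have "cls (P (gen star_rack) a) = cls a"
    using abc unit_NN[of a] nf_star by (simp add: P_FC cls_eq_iff)
  then show ?thesis using abc nf_star by (simp add: mulB_cls P_FC)
qed
lemma L_distr: "x \<in> CC \<Longrightarrow> y \<in> CC \<Longrightarrow> z \<in> CC \<Longrightarrow>
   mulB (x <#>\<^bsub>free_group\<^esub> y) z = mulB x z <#>\<^bsub>free_group\<^esub> mulB y z"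
  by (auto simp: mulB_cls P_FC cls_mult P_fadd1)

lemma main: "cring \<lparr>carrier = CC, monoid.mult = mulB, one = cls (gen star_rack),
                       ring.zero = cls fz, ring.add = set_mult free_group\<rparr>"
  apply (rule cringI)
    apply (rule abelian_groupI)
         apply (simp_all only: partial_object.simps monoid.simps ring.simps)
         apply (rule L_add_closed; assumption)
        apply (rule L_zero_closed)
       apply (rule L_add_assoc; assumption)
      apply (rule L_add_comm; assumption)
     apply (rule L_zero; assumption)
    apply (rule L_inv; assumption)
   apply (rule comm_monoidI)
       apply (simp_all only: partial_object.simps monoid.simps ring.simps)
       apply (rule L_mul_closed; assumption)
      apply (rule L_one_closed)
     apply (rule L_mul_assoc; assumption)
    apply (rule L_one; assumption)
   apply (rule L_mul_comm; assumption)
  apply (rule L_distr; assumption)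
  done

lemma bg_carrier: "carrier burnside_group = CC"
  unfolding burnside_group_def FactGroup_def RCOSETS_def cls_def by auto
lemma bg_mult: "monoid.mult burnside_group = set_mult free_group"
  unfolding burnside_group_def FactGroup_def by simp
lemma bg_one: "one burnside_group = cls fz"
proof -
  have "cls fz = NN" unfolding cls_alt by (simp add: fadd_fz)
  then show ?thesis unfolding burnside_group_def FactGroup_def by simp
qed
lemma bclass_cls: "bclass R = cls (gen R)" unfolding bclass_def cls_def ..

theorem proposition3p15:
  shows "\<exists>mul. cring \<lparr>carrier = carrier burnside_group, monoid.mult = mul,
                       one = bclass star_rack,
                       ring.zero = one burnside_group, ring.add = monoid.mult burnside_group\<rparr>
             \<and> (\<forall>R R'. nfinite_rack R \<longrightarrow> nfinite_rack R' \<longrightarrow>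
                   mul (bclass R') (bclass R) = bclass (nrack_prod R' R))"
proof (intro exI conjI allI impI)
  show "cring \<lparr>carrier = carrier burnside_group, monoid.mult = mulB,
                       one = bclass star_rack,
                       ring.zero = one burnside_group, ring.add = monoid.mult burnside_group\<rparr>"
    unfolding bg_carrier bg_mult bg_one bclass_cls by (rule main)
next
  fix R R' assume "nfinite_rack R" "nfinite_rack R'"
  then show "mulB (bclass R') (bclass R) = bclass (nrack_prod R' R)"
    unfolding bclass_cls by (simp add: mulB_cls P_gen)
qed

end
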